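(* Let $I$ be a monomial ideal of $R=K[x_1,\ldots,x_d]$ ($K$ a field), and write its Newton polyhedron as $NP(I)=\{\mathbf{x}\in\mathbb{R}^d_+\mid \mathbf{a}_i\cdot\mathbf{x}\ge c_i \text{ for } 1\le i\le s\}$ with $\mathbf{a}_i\in\mathbb{N}^d$, $c_i\in\mathbb{N}$, $\gcd(\mathbf{a}_{i1},\ldots,\mathbf{a}_{id},c_i)=1$, where for each $i$ the set $F_i=\{\mathbf{x}\in NP(I)\mid \mathbf{a}_i\cdot\mathbf{x}=c_i\}$ is a facet of $NP(I)$, and $F_1,\ldots,F_s$ are the facets of $NP(I)$. For $r\in\mathbb{R}_+$ the following are equivalent: (1) $r$ is a jumping number for $I$; (2) for some $1\le i\le s$ with $c_i\neq0$ there exists a lattice point $\mathbf{p}\in r\cdot F_i\cap\mathbb{N}^d$; (3) for some $1\le i\le s$ with $c_i\neq0$ there exists $\mathbf{x}\in\mathbb{N}^d$ with $\mathbf{a}_i\cdot\mathbf{x}=rc_i$ and $\mathbf{a}_j\cdot\mathbf{x}\ge rc_j$ for all $1\le j\le s$, $j\neq i$.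
   Context: $\mathbb{R}_+$ denotes the non-negative reals, $\mathbb{N}$ the non-negative integers, and $\mathbf{x}^{\mathbf{a}}=x_1^{a_1}\cdots x_d^{a_d}$. $NP(I)$ is the convex hull in $\mathbb{R}^d$ of $\{\mathbf{a}\in\mathbb{N}^d\mid \mathbf{x}^{\mathbf{a}}\in I\}$ (a lattice polyhedron). Scaling means $r\cdot NP(I)=\{\mathbf{x}\in\mathbb{R}^d_+\mid \mathbf{a}_i\cdot\mathbf{x}\ge rc_i,\ 1\le i\le s\}$ and $r\cdot F_i=\{\mathbf{x}\in r\cdot NP(I)\mid \mathbf{a}_i\cdot\mathbf{x}=rc_i\}$. For real $t\ge0$, the $t$-th real power is $\overline{I^t}=(\{\mathbf{x}^{\mathbf{a}}\mid \mathbf{a}\in t\cdot NP(I)\cap\mathbb{N}^d\})$, and $\overline{I^{>r}}=\bigcup_{t>r}\overline{I^t}$. A jumping number for $I$ is a real $r\ge0$ with $\overline{I^r}\neq\overline{I^{>r}}$. *)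

theory Defs
  imports "HOL-Analysis.Analysis"
begin

text \<open>Exponent vectors of monomials x^a in K[x_1..x_d] are identified with lattice
  points of R^d (index type 'd, d = CARD('d)).  A monomial ideal I is identified with
  its set of exponents {a. x^a in I}, an upward-closed subset of N^d.\<close>

definition lattice_pts :: "(real^'d) set" where
  "lattice_pts = {x. \<forall>j. x $ j \<in> \<nat>}"

definition monomial_ideal_exps :: "(real^'d) set \<Rightarrow> bool" where
  "monomial_ideal_exps E \<longleftrightarrow> E \<subseteq> lattice_pts \<and>
     (\<forall>p\<in>E. \<forall>q\<in>lattice_pts. (\<forall>j. p $ j \<le> q $ j) \<longrightarrow> q \<in> E)"

definition gen_exps :: "(real^'d) set \<Rightarrow> (real^'d) set" where
  "gen_exps S = {q \<in> lattice_pts. \<exists>p\<in>S. \<forall>j. p $ j \<le> q $ j}"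

definition NP :: "(real^'d) set \<Rightarrow> (real^'d) set" where
  "NP E = convex hull E"

definition dotp :: "nat^'d \<Rightarrow> real^'d \<Rightarrow> real" where
  "dotp a x = (\<Sum>j\<in>UNIV. real (a $ j) * x $ j)"

definition scaled_NP :: "(nat \<Rightarrow> nat^'d) \<Rightarrow> (nat \<Rightarrow> nat) \<Rightarrow> nat \<Rightarrow> real \<Rightarrow> (real^'d) set" where
  "scaled_NP a c s r = {x. (\<forall>j. 0 \<le> x $ j) \<and> (\<forall>i\<in>{1..s}. r * real (c i) \<le> dotp (a i) x)}"

definition scaled_facet :: "(nat \<Rightarrow> nat^'d) \<Rightarrow> (nat \<Rightarrow> nat) \<Rightarrow> nat \<Rightarrow> real \<Rightarrow> nat \<Rightarrow> (real^'d) set" where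
  "scaled_facet a c s r i = {x \<in> scaled_NP a c s r. dotp (a i) x = r * real (c i)}"

definition real_power :: "(nat \<Rightarrow> nat^'d) \<Rightarrow> (nat \<Rightarrow> nat) \<Rightarrow> nat \<Rightarrow> real \<Rightarrow> (real^'d) set" where
  "real_power a c s t = gen_exps (scaled_NP a c s t \<inter> lattice_pts)"

definition real_power_gt :: "(nat \<Rightarrow> nat^'d) \<Rightarrow> (nat \<Rightarrow> nat) \<Rightarrow> nat \<Rightarrow> real \<Rightarrow> (real^'d) set" where
  "real_power_gt a c s r = (\<Union>t\<in>{r<..}. real_power a c s t)"

definition jumping_number :: "(nat \<Rightarrow> nat^'d) \<Rightarrow> (nat \<Rightarrow> nat) \<Rightarrow> nat \<Rightarrow> real \<Rightarrow> bool" where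
  "jumping_number a c s r \<longleftrightarrow> 0 \<le> r \<and> real_power a c s r \<noteq> real_power_gt a c s r"

end

theory Submission
  imports Defs
begin

lemma lat_nonneg: "x \<in> lattice_pts \<Longrightarrow> 0 \<le> x $ j"
proof -
  assume "x \<in> lattice_pts"
  then have "x $ j \<in> \<nat>" unfolding lattice_pts_def by blast
  then show "0 \<le> x $ j" by (induct rule: Nats_induct) simp
qed

lemma dotp_nonneg: "(\<And>j. 0 \<le> x $ j) \<Longrightarrow> 0 \<le> dotp a x"
  unfolding dotp_def by (intro sum_nonneg) simp

lemma dotp_mono: "(\<And>j. p $ j \<le> q $ j) \<Longrightarrow> dotp a p \<le> dotp a q"
  unfolding dotp_def by (intro sum_mono mult_left_mono) auto

lemma NP_anti:
  assumes "r \<le> t" "x \<in> scaled_NP a c s t" shows "x \<in> scaled_NP a c s r"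
proof -
  have h: "\<forall>j. 0 \<le> x $ j" "\<forall>i\<in>{1..s}. t * real (c i) \<le> dotp (a i) x"
    using assms(2) unfolding scaled_NP_def by auto
  have "r * real (c i) \<le> dotp (a i) x" if "i \<in> {1..s}" for i
  proof -
    have "r * real (c i) \<le> t * real (c i)" using assms(1) by (intro mult_right_mono) auto
    also have "\<dots> \<le> dotp (a i) x" using h that by blast
    finally show ?thesis .
  qed
  then show ?thesis using h unfolding scaled_NP_def by auto
qed

lemma jump_iff:
  assumes r: "0 \<le> r"
  shows "jumping_number a c s r \<longleftrightarrow>
            (\<exists>i\<in>{1..s}. c i \<noteq> 0 \<and> (\<exists>p. p \<in> scaled_facet a c s r i \<inter> lattice_pts))"
proof
  assume "jumping_number a c s r"
  hence ne: "real_power a c s r \<noteq> real_power_gt a c s r" unfolding jumping_number_def by simp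
  have sub: "real_power_gt a c s r \<subseteq> real_power a c s r"
  proof
    fix x assume "x \<in> real_power_gt a c s r"
    then obtain t where t: "r < t" "x \<in> gen_exps (scaled_NP a c s t \<inter> lattice_pts)"
      unfolding real_power_gt_def real_power_def by auto
    then obtain p where "x \<in> lattice_pts" "p \<in> scaled_NP a c s t" "p \<in> lattice_pts" "\<forall>j. p $ j \<le> x $ j"
      unfolding gen_exps_def by blast
    moreover have "p \<in> scaled_NP a c s r" using NP_anti[of r t p] t(1) calculation(2) by simp
    ultimately show "x \<in> real_power a c s r" unfolding real_power_def gen_exps_def by blast
  qed
  obtain q where q: "q \<in> real_power a c s r" "q \<notin> real_power_gt a c s r"
    using ne sub by blast
  from q(1) obtain p where qL: "q \<in> lattice_pts" and p: "p \<in> scaled_NP a c s r" "\<forall>j. p $ j \<le> q $ j"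
    unfolding real_power_def gen_exps_def by blast
  have qnn: "\<And>j. 0 \<le> q $ j" using qL lat_nonneg by blast
  have qNP: "q \<in> scaled_NP a c s r"
  proof -
    have "r * real (c i) \<le> dotp (a i) q" if "i \<in> {1..s}" for i
    proof -
      have "r * real (c i) \<le> dotp (a i) p" using p(1) that unfolding scaled_NP_def by blast
      also have "\<dots> \<le> dotp (a i) q" using p(2) by (intro dotp_mono) blast
      finally show ?thesis .
    qed
    then show ?thesis using qnn unfolding scaled_NP_def by blast
  qed
  show "\<exists>i\<in>{1..s}. c i \<noteq> 0 \<and> (\<exists>p. p \<in> scaled_facet a c s r i \<inter> lattice_pts)"
  proof (rule ccontr)
    assume nc: "\<not> ?thesis"
    have gt: "\<And>i. i \<in> {1..s} \<Longrightarrow> c i \<noteq> 0 \<Longrightarrow> r * real (c i) < dotp (a i) q"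
    proof -
      fix i assume i: "i \<in> {1..s}" "c i \<noteq> 0"
      have "r * real (c i) \<le> dotp (a i) q" using qNP i unfolding scaled_NP_def by blast
      moreover have "dotp (a i) q \<noteq> r * real (c i)"
        using nc i qNP qL unfolding scaled_facet_def by blast
      ultimately show "r * real (c i) < dotp (a i) q" by simp
    qed
    define S where "S = {i\<in>{1..s}. c i \<noteq> 0}"
    define \<delta> where "\<delta> = Min (insert 1 ((\<lambda>i. (dotp (a i) q - r * real (c i)) / real (c i)) ` S))"
    have fin: "finite (insert 1 ((\<lambda>i. (dotp (a i) q - r * real (c i)) / real (c i)) ` S))"
      unfolding S_def by simp
    have dpos: "\<delta> > 0"
    proof -
      have "0 < (dotp (a i) q - r * real (c i)) / real (c i)" if "i \<in> S" for i
      proof -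
        from that have "i \<in> {1..s}" "c i \<noteq> 0" unfolding S_def by auto
        then have "r * real (c i) < dotp (a i) q" "real (c i) > 0" using gt by auto
        then show ?thesis by simp
      qed
      then have "\<forall>x\<in>insert 1 ((\<lambda>i. (dotp (a i) q - r * real (c i)) / real (c i)) ` S). 0 < x"
        by auto
      then show ?thesis unfolding \<delta>_def using Min_gr_iff[OF fin] by blast
    qed
    have dle: "\<And>i. i \<in> S \<Longrightarrow> \<delta> \<le> (dotp (a i) q - r * real (c i)) / real (c i)"
      unfolding \<delta>_def using fin by (intro Min_le) auto
    have "q \<in> scaled_NP a c s (r + \<delta>)"
      unfolding scaled_NP_def
    proof (intro CollectI conjI allI ballI)
      fix j show "0 \<le> q $ j" using qnn .
    next
      fix i assume i: "i \<in> {1..s}"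
      show "(r + \<delta>) * real (c i) \<le> dotp (a i) q"
      proof (cases "c i = 0")
        case True thus ?thesis using dotp_nonneg[of q "a i", OF qnn] by simp
      next
        case False
        hence "i \<in> S" using i S_def by simp
        from dle[OF this] False show ?thesis
          by (simp add: field_simps)
      qed
    qed
    hence "q \<in> real_power a c s (r + \<delta>)"
      unfolding real_power_def gen_exps_def using qL by auto
    hence "q \<in> real_power_gt a c s r" unfolding real_power_gt_def using dpos by auto
    with q(2) show False by simp
  qed
next
  assume "\<exists>i\<in>{1..s}. c i \<noteq> 0 \<and> (\<exists>p. p \<in> scaled_facet a c s r i \<inter> lattice_pts)"
  then obtain i p where i: "i \<in> {1..s}" "c i \<noteq> 0" and p: "p \<in> scaled_facet a c s r i" "p \<in> lattice_pts"
    by blast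
  have "p \<in> real_power a c s r"
    using p unfolding real_power_def gen_exps_def scaled_facet_def by auto
  moreover have "p \<notin> real_power_gt a c s r"
  proof
    assume "p \<in> real_power_gt a c s r"
    then obtain t q where t: "r < t" and q: "q \<in> scaled_NP a c s t" "\<forall>j. q $ j \<le> p $ j"
      unfolding real_power_gt_def real_power_def gen_exps_def by auto
    have "t * real (c i) \<le> dotp (a i) q" using q i unfolding scaled_NP_def by blast
    also have "\<dots> \<le> dotp (a i) p" using q(2) dotp_mono by blast
    also have "\<dots> = r * real (c i)" using p unfolding scaled_facet_def by simp
    finally show False using t i(2) by simp
  qed
  ultimately show "jumping_number a c s r" unfolding jumping_number_def using r by blast
qed

theorem proposition5p8:
  fixes E :: "(real^'d) set"
    and a :: "nat \<Rightarrow> nat^'d" and c :: "nat \<Rightarrow> nat" and s :: nat and r :: real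
  assumes mono: "monomial_ideal_exps E"
    and NP_eq: "NP E = scaled_NP a c s 1"
    and gcd1: "\<And>i. i \<in> {1..s} \<Longrightarrow> Gcd (insert (c i) (range (\<lambda>j. a i $ j))) = 1"
    and facets: "\<And>i. i \<in> {1..s} \<Longrightarrow> scaled_facet a c s 1 i facet_of NP E"
    and all_facets: "{F. F facet_of NP E} = (\<lambda>i. scaled_facet a c s 1 i) ` {1..s}"
    and r: "0 \<le> r"
  shows "(jumping_number a c s r \<longleftrightarrow>
            (\<exists>i\<in>{1..s}. c i \<noteq> 0 \<and> (\<exists>p. p \<in> scaled_facet a c s r i \<inter> lattice_pts)))
       \<and> ((\<exists>i\<in>{1..s}. c i \<noteq> 0 \<and> (\<exists>p. p \<in> scaled_facet a c s r i \<inter> lattice_pts)) \<longleftrightarrow>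
            (\<exists>i\<in>{1..s}. c i \<noteq> 0 \<and> (\<exists>x\<in>lattice_pts. dotp (a i) x = r * real (c i) \<and>
               (\<forall>j\<in>{1..s}. j \<noteq> i \<longrightarrow> r * real (c j) \<le> dotp (a j) x))))"
proof (intro conjI)
  show "jumping_number a c s r \<longleftrightarrow>
            (\<exists>i\<in>{1..s}. c i \<noteq> 0 \<and> (\<exists>p. p \<in> scaled_facet a c s r i \<inter> lattice_pts))"
    using jump_iff[OF r] .
next
  have eq: "x \<in> scaled_facet a c s r i \<longleftrightarrow>
     (dotp (a i) x = r * real (c i) \<and> (\<forall>j\<in>{1..s}. j \<noteq> i \<longrightarrow> r * real (c j) \<le> dotp (a j) x))"
    if "x \<in> lattice_pts" "i \<in> {1..s}" for i x
  proof
    assume "x \<in> scaled_facet a c s r i"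
    then show "dotp (a i) x = r * real (c i) \<and> (\<forall>j\<in>{1..s}. j \<noteq> i \<longrightarrow> r * real (c j) \<le> dotp (a j) x)"
      unfolding scaled_facet_def scaled_NP_def by blast
  next
    assume h: "dotp (a i) x = r * real (c i) \<and> (\<forall>j\<in>{1..s}. j \<noteq> i \<longrightarrow> r * real (c j) \<le> dotp (a j) x)"
    have "\<forall>j\<in>{1..s}. r * real (c j) \<le> dotp (a j) x"
    proof
      fix j assume "j \<in> {1..s}"
      then show "r * real (c j) \<le> dotp (a j) x" using h by (cases "j = i") auto
    qed
    moreover have "\<forall>j. 0 \<le> x $ j" using lat_nonneg that(1) by blast
    ultimately show "x \<in> scaled_facet a c s r i"
      unfolding scaled_facet_def scaled_NP_def using h by blast
  qed
  show "(\<exists>i\<in>{1..s}. c i \<noteq> 0 \<and> (\<exists>p. p \<in> scaled_facet a c s r i \<inter> lattice_pts)) \<longleftrightarrow>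
            (\<exists>i\<in>{1..s}. c i \<noteq> 0 \<and> (\<exists>x\<in>lattice_pts. dotp (a i) x = r * real (c i) \<and>
               (\<forall>j\<in>{1..s}. j \<noteq> i \<longrightarrow> r * real (c j) \<le> dotp (a j) x)))"
  proof
    assume "\<exists>i\<in>{1..s}. c i \<noteq> 0 \<and> (\<exists>p. p \<in> scaled_facet a c s r i \<inter> lattice_pts)"
    then obtain i p where "i \<in> {1..s}" "c i \<noteq> 0" "p \<in> scaled_facet a c s r i" "p \<in> lattice_pts" by blast
    with eq show "\<exists>i\<in>{1..s}. c i \<noteq> 0 \<and> (\<exists>x\<in>lattice_pts. dotp (a i) x = r * real (c i) \<and>
               (\<forall>j\<in>{1..s}. j \<noteq> i \<longrightarrow> r * real (c j) \<le> dotp (a j) x))" by blast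
  next
    assume "\<exists>i\<in>{1..s}. c i \<noteq> 0 \<and> (\<exists>x\<in>lattice_pts. dotp (a i) x = r * real (c i) \<and>
               (\<forall>j\<in>{1..s}. j \<noteq> i \<longrightarrow> r * real (c j) \<le> dotp (a j) x))"
    then obtain i p where "i \<in> {1..s}" "c i \<noteq> 0" "p \<in> lattice_pts" "dotp (a i) p = r * real (c i)"
      "\<forall>j\<in>{1..s}. j \<noteq> i \<longrightarrow> r * real (c j) \<le> dotp (a j) p" by blast
    with eq show "\<exists>i\<in>{1..s}. c i \<noteq> 0 \<and> (\<exists>p. p \<in> scaled_facet a c s r i \<inter> lattice_pts)" by blast
  qed
qed

end
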